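(* Let $(G,H)$ be an odd pair, i.e. $H<G$ are countable abelian groups such that every element of $G/H$ has odd order. Then the exact sequence \[0\to H\overset{i}{\to}G\overset{\pi}{\to}G/H\to0\] is coarsely split.
   Context: A proper left invariant metric on a countable group is $d(g,h)=\|g^{-1}h\|$ for a proper norm $\|\cdot\|$ ($\|g\|=0$ iff $g=1$, $\|g\|=\|g^{-1}\|$, $\|gh\|\le\|g\|+\|h\|$, finite balls). A map $f$ is coarse if for every $\delta>0$ there is $\epsilon>0$ with $d(x,y)\le\delta\Rightarrow d(f(x),f(y))\le\epsilon$; a coarse equivalence is a coarse map having a coarse inverse up to bounded distance. An exact sequence $0\to K\overset{i}{\to}G\overset{\pi}{\to}Q\to0$ is coarsely split if there are proper left invariant metrics $d_K,d_G,d_Q$ and a coarse equivalence $f:(G,d_G)\to(K\oplus Q,d_K\oplus d_Q)$ ($\ell_1$ sum metric) such that $f\circ i$ is at bounded distance from $k\mapsto(k,0)$ and $\pi'\circ f$ is at bounded distance from $\pi$, where $\pi':K\oplus Q\to Q$ is the projection. *)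

theory Defs
  imports "HOL-Algebra.Algebra" "HOL-Library.Countable_Set"
begin

definition proper_norm :: "('a, 'b) monoid_scheme \<Rightarrow> ('a \<Rightarrow> real) \<Rightarrow> bool" where
  "proper_norm G N \<longleftrightarrow>
     (\<forall>g\<in>carrier G. N g = 0 \<longleftrightarrow> g = \<one>\<^bsub>G\<^esub>) \<and>
     (\<forall>g\<in>carrier G. N g = N (m_inv G g)) \<and>
     (\<forall>g\<in>carrier G. \<forall>h\<in>carrier G. N (monoid.mult G g h) \<le> N g + N h) \<and>
     (\<forall>r::real. finite {g\<in>carrier G. N g \<le> r})"

definition norm_metric :: "('a, 'b) monoid_scheme \<Rightarrow> ('a \<Rightarrow> real) \<Rightarrow> 'a \<Rightarrow> 'a \<Rightarrow> real" where
  "norm_metric G N g h = N (monoid.mult G (m_inv G g) h)"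

definition coarse_map :: "'x set \<Rightarrow> ('x \<Rightarrow> 'x \<Rightarrow> real) \<Rightarrow> 'y set \<Rightarrow> ('y \<Rightarrow> 'y \<Rightarrow> real)
    \<Rightarrow> ('x \<Rightarrow> 'y) \<Rightarrow> bool" where
  "coarse_map A dA B dB u \<longleftrightarrow> u ` A \<subseteq> B \<and>
     (\<forall>dlt>0. \<exists>eps>0. \<forall>x\<in>A. \<forall>y\<in>A. dA x y \<le> dlt \<longrightarrow> dB (u x) (u y) \<le> eps)"

definition bounded_distance :: "'x set \<Rightarrow> ('y \<Rightarrow> 'y \<Rightarrow> real) \<Rightarrow> ('x \<Rightarrow> 'y) \<Rightarrow> ('x \<Rightarrow> 'y) \<Rightarrow> bool" where
  "bounded_distance A d u v \<longleftrightarrow> (\<exists>C. \<forall>x\<in>A. d (u x) (v x) \<le> C)"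

definition coarse_equivalence :: "'x set \<Rightarrow> ('x \<Rightarrow> 'x \<Rightarrow> real) \<Rightarrow> 'y set \<Rightarrow> ('y \<Rightarrow> 'y \<Rightarrow> real)
    \<Rightarrow> ('x \<Rightarrow> 'y) \<Rightarrow> bool" where
  "coarse_equivalence A dA B dB u \<longleftrightarrow> coarse_map A dA B dB u \<and>
     (\<exists>v. coarse_map B dB A dA v \<and>
          bounded_distance A dA (v \<circ> u) id \<and> bounded_distance B dB (u \<circ> v) id)"

definition sum_metric :: "('k \<Rightarrow> 'k \<Rightarrow> real) \<Rightarrow> ('q \<Rightarrow> 'q \<Rightarrow> real) \<Rightarrow> 'k \<times> 'q \<Rightarrow> 'k \<times> 'q \<Rightarrow> real" where
  "sum_metric dK dQ a b = dK (fst a) (fst b) + dQ (snd a) (snd b)"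

definition coarsely_split ::
  "('k, 'c) monoid_scheme \<Rightarrow> ('g, 'd) monoid_scheme \<Rightarrow> ('q, 'e) monoid_scheme
     \<Rightarrow> ('k \<Rightarrow> 'g) \<Rightarrow> ('g \<Rightarrow> 'q) \<Rightarrow> bool" where
  "coarsely_split K G Q i \<pi> \<longleftrightarrow>
     (\<exists>NK NG NQ f. proper_norm K NK \<and> proper_norm G NG \<and> proper_norm Q NQ \<and>
        coarse_equivalence (carrier G) (norm_metric G NG)
          (carrier K \<times> carrier Q) (sum_metric (norm_metric K NK) (norm_metric Q NQ)) f \<and>
        bounded_distance (carrier K) (sum_metric (norm_metric K NK) (norm_metric Q NQ))
          (f \<circ> i) (\<lambda>k. (k, \<one>\<^bsub>Q\<^esub>)) \<and>
        bounded_distance (carrier G) (norm_metric Q NQ) (snd \<circ> f) \<pi>)"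

end

theory Submission
  imports Defs
begin


context group begin

definition wprod :: "'a list \<Rightarrow> 'a" where "wprod xs = foldr (\<otimes>) xs \<one>"

lemma wprod_closed: "set xs \<subseteq> carrier G \<Longrightarrow> wprod xs \<in> carrier G"
  by (induction xs) (auto simp: wprod_def)

lemma wprod_append: "set xs \<subseteq> carrier G \<Longrightarrow> set ys \<subseteq> carrier G \<Longrightarrow>
   wprod (xs @ ys) = wprod xs \<otimes> wprod ys"
  by (induction xs) (auto simp: wprod_def m_assoc wprod_closed[unfolded wprod_def])

lemma wprod_inv: "set xs \<subseteq> carrier G \<Longrightarrow> inv (wprod xs) = wprod (map (\<lambda>x. inv x) (rev xs))"
proof (induction xs)
  case Nil then show ?case by (simp add: wprod_def)
next
  case (Cons x xs)
  have "inv (wprod (x # xs)) = inv (wprod xs) \<otimes> inv x"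
    using Cons by (simp add: wprod_def inv_mult_group wprod_closed[unfolded wprod_def])
  also have "\<dots> = wprod (map (\<lambda>x. inv x) (rev xs) @ [inv x])"
    using Cons by (subst wprod_append) (auto simp: wprod_def)
  finally show ?case by simp
qed

end

lemma (in group) proper_norm_exists:
  assumes cG: "countable (carrier G)"
  shows "\<exists>N. proper_norm G N"
proof -
  define e where "e = from_nat_into (carrier G)"
  have ne: "carrier G \<noteq> {}" by auto
  have e_range: "range e = carrier G" unfolding e_def using range_from_nat_into[OF ne cG] .
  define S where "S n = e ` {..n} \<union> (\<lambda>x. inv x) ` e ` {..n}" for n
  have S_car: "S n \<subseteq> carrier G" for n using e_range unfolding S_def by auto
  have S_fin: "finite (S n)" for n unfolding S_def by auto
  have S_mono: "m \<le> n \<Longrightarrow> S m \<subseteq> S n" for m n unfolding S_def by auto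
  have S_inv: "x \<in> S n \<Longrightarrow> inv x \<in> S n" for x n
  proof -
    assume "x \<in> S n"
    then consider k where "k \<le> n" "x = e k" | k where "k \<le> n" "x = inv (e k)" unfolding S_def by auto
    then show "inv x \<in> S n"
    proof cases
      case 1 then show ?thesis unfolding S_def by auto
    next
      case 2
      have "e k \<in> carrier G" using e_range by auto
      then have "inv x = e k" using 2 by simp
      then show ?thesis using 2 unfolding S_def by auto
    qed
  qed
  define W where "W n = wprod ` {xs. set xs \<subseteq> S n \<and> length xs \<le> n}" for n
  have W_car: "W n \<subseteq> carrier G" for n
    unfolding W_def using S_car wprod_closed by blast
  have W_fin: "finite (W n)" for n
    unfolding W_def by (intro finite_imageI finite_lists_length_le S_fin)
  have W_mono: "m \<le> n \<Longrightarrow> W m \<subseteq> W n" for m n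
    unfolding W_def using S_mono by fastforce
  have W_mult: "g \<in> W m \<Longrightarrow> h \<in> W n \<Longrightarrow> g \<otimes> h \<in> W (m + n)" for g h m n
  proof -
    assume "g \<in> W m" "h \<in> W n"
    then obtain xs ys where xs: "set xs \<subseteq> S m" "length xs \<le> m" "g = wprod xs"
      and ys: "set ys \<subseteq> S n" "length ys \<le> n" "h = wprod ys" unfolding W_def by auto
    have "g \<otimes> h = wprod (xs @ ys)" using xs ys S_car[of m] S_car[of n] wprod_append[of xs ys] by auto
    moreover have "set (xs @ ys) \<subseteq> S (m+n)" using xs ys S_mono[of m "m+n"] S_mono[of n "m+n"] by auto
    moreover have "length (xs @ ys) \<le> m + n" using xs ys by simp
    ultimately show ?thesis unfolding W_def by blast
  qed
  have W_inv: "g \<in> W n \<Longrightarrow> inv g \<in> W n" for g n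
  proof -
    assume "g \<in> W n"
    then obtain xs where xs: "set xs \<subseteq> S n" "length xs \<le> n" "g = wprod xs" unfolding W_def by auto
    have "inv g = wprod (map (\<lambda>x. inv x) (rev xs))" using xs S_car[of n] wprod_inv[of xs] by auto
    moreover have "set (map (\<lambda>x. inv x) (rev xs)) \<subseteq> S n" using xs S_inv by auto
    ultimately show ?thesis unfolding W_def using xs by force
  qed
  have W0: "W 0 = {\<one>}" unfolding W_def by (auto simp: wprod_def)
  have W_ex: "g \<in> carrier G \<Longrightarrow> \<exists>n. g \<in> W n" for g
  proof -
    assume "g \<in> carrier G"
    then obtain k where k: "g = e k" using e_range by auto
    have "g \<in> S (Suc k)" unfolding S_def k by auto
    then have "wprod [g] \<in> W (Suc k)" unfolding W_def by force
    moreover have "wprod [g] = g" using \<open>g \<in> carrier G\<close> by (simp add: wprod_def)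
    ultimately show ?thesis by auto
  qed
  define L where "L g = (LEAST n. g \<in> W n)" for g
  have LI: "g \<in> carrier G \<Longrightarrow> g \<in> W (L g)" for g unfolding L_def using W_ex by (meson LeastI_ex)
  have Lle: "g \<in> W n \<Longrightarrow> L g \<le> n" for g n unfolding L_def by (rule Least_le)
  define N where "N g = real (L g)" for g
  have "proper_norm G N"
    unfolding proper_norm_def
  proof (intro conjI ballI allI)
    fix g assume g: "g \<in> carrier G"
    show "N g = 0 \<longleftrightarrow> g = \<one>"
    proof
      assume "N g = 0" then have "L g = 0" unfolding N_def by simp
      then show "g = \<one>" using LI[OF g] W0 by simp
    next
      assume "g = \<one>" then have "L g \<le> 0" using Lle[of g 0] W0 by simp
      then show "N g = 0" unfolding N_def by simp
    qed
    have "L (inv g) \<le> L g" using Lle W_inv LI g by blast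
    moreover have "L g \<le> L (inv g)" using Lle[of g] W_inv[OF LI[of "inv g"]] g by simp
    ultimately show "N g = N (inv g)" unfolding N_def by simp
  next
    fix g h assume g: "g \<in> carrier G" and h: "h \<in> carrier G"
    have "L (g \<otimes> h) \<le> L g + L h" using Lle W_mult LI g h by blast
    then show "N (g \<otimes> h) \<le> N g + N h" unfolding N_def by simp
  next
    fix r :: real
    have "{g \<in> carrier G. N g \<le> r} \<subseteq> W (nat \<lfloor>r\<rfloor>)"
    proof
      fix g assume "g \<in> {g \<in> carrier G. N g \<le> r}"
      then have g: "g \<in> carrier G" and le: "real (L g) \<le> r" unfolding N_def by auto
      have "L g \<le> nat \<lfloor>r\<rfloor>" using le by linarith
      then show "g \<in> W (nat \<lfloor>r\<rfloor>)" using W_mono LI[OF g] by blast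
    qed
    then show "finite {g \<in> carrier G. N g \<le> r}" using W_fin finite_subset by blast
  qed
  then show ?thesis by blast
qed



locale lfq = comm_group Q for Q (structure) + fixes e :: "nat \<Rightarrow> 'a"
  assumes e_range: "range e = carrier Q"
    and ord_pos: "\<And>x. x \<in> carrier Q \<Longrightarrow> 0 < ord x"
begin

lemma e_car[simp]: "e k \<in> carrier Q" using e_range by auto

primrec Qs :: "nat \<Rightarrow> _ set" where
  "Qs 0 = {\<one>}"
| "Qs (Suc k) = {r \<otimes> e k [^] (c::int) | r c. r \<in> Qs k}"

lemma Qs_SucI: "r \<in> Qs k \<Longrightarrow> r \<otimes> e k [^] (c::int) \<in> Qs (Suc k)"
  by auto

lemma canc[simp]: "x \<in> carrier Q \<Longrightarrow> y \<in> carrier Q \<Longrightarrow> x \<otimes> (inv x \<otimes> y) = y"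
  by (simp add: m_assoc[symmetric])

lemma Qs_sub: "subgroup (Qs k) Q"
proof (induction k)
  case 0 then show ?case by (simp add: triv_subgroup)
next
  case (Suc k)
  interpret S: subgroup "Qs k" Q by (rule Suc)
  show ?case
  proof (rule subgroupI)
    show "Qs (Suc k) \<subseteq> carrier Q" by auto
    show "Qs (Suc k) \<noteq> {}" using Qs_SucI[OF S.one_closed] by blast
  next
    fix a assume "a \<in> Qs (Suc k)"
    then obtain r c where rc: "r \<in> Qs k" "a = r \<otimes> e k [^] (c::int)" by auto
    have "inv a = inv r \<otimes> e k [^] (-c)"
      using rc by (simp add: inv_mult int_pow_neg m_comm)
    then show "inv a \<in> Qs (Suc k)" using rc by auto
  next
    fix a b assume "a \<in> Qs (Suc k)" "b \<in> Qs (Suc k)"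
    then obtain r c r' c' where rc: "r \<in> Qs k" "a = r \<otimes> e k [^] (c::int)"
      and rc': "r' \<in> Qs k" "b = r' \<otimes> e k [^] (c'::int)" by auto
    have "a \<otimes> b = (r \<otimes> r') \<otimes> e k [^] (c + c')"
      using rc rc' by (simp add: int_pow_mult m_ac)
    then show "a \<otimes> b \<in> Qs (Suc k)" using rc rc' by auto
  qed
qed

lemma Qs_car: "Qs k \<subseteq> carrier Q" using Qs_sub subgroup.subset by blast

lemma Qs_Suc: "Qs k \<subseteq> Qs (Suc k)"
proof
  fix x assume "x \<in> Qs k"
  then have "x \<in> carrier Q" using Qs_car by auto
  then have "x = x \<otimes> e k [^] (0::int)" by auto
  then show "x \<in> Qs (Suc k)" using Qs_SucI[OF \<open>x \<in> Qs k\<close>] by metis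
qed

lemma Qs_mono: "j \<le> k \<Longrightarrow> Qs j \<subseteq> Qs k"
  by (induction k rule: dec_induct) (use Qs_Suc in auto)

lemma e_in: "e k \<in> Qs (Suc k)"
proof -
  have "e k = \<one> \<otimes> e k [^] (1::int)" by simp
  moreover have "\<one> \<in> Qs k" using subgroup.one_closed[OF Qs_sub] .
  ultimately show ?thesis using Qs_SucI by metis
qed

lemma Qs_ex: "x \<in> carrier Q \<Longrightarrow> \<exists>k. x \<in> Qs k"
  using e_range e_in by (metis imageE)

definition m :: "nat \<Rightarrow> nat" where
  "m k = (LEAST n. 0 < n \<and> e k [^] n \<in> Qs k)"

lemma m_props: "0 < m k" "e k [^] m k \<in> Qs k" "\<And>n. 0 < n \<Longrightarrow> n < m k \<Longrightarrow> e k [^] n \<notin> Qs k"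
proof -
  have ex: "0 < ord (e k) \<and> e k [^] ord (e k) \<in> Qs k"
    using ord_pos[of "e k"] subgroup.one_closed[OF Qs_sub] by simp
  show "0 < m k" "e k [^] m k \<in> Qs k" using LeastI_ex[of "\<lambda>n. 0 < n \<and> e k [^] n \<in> Qs k"] ex
    unfolding m_def by blast+
  show "\<And>n. 0 < n \<Longrightarrow> n < m k \<Longrightarrow> e k [^] n \<notin> Qs k"
    unfolding m_def using not_less_Least by blast
qed

lemma a_ex: assumes "x \<in> Qs (Suc k)" shows "\<exists>a. a < m k \<and> x \<otimes> inv (e k [^] a) \<in> Qs k"
proof -
  interpret S: subgroup "Qs k" Q by (rule Qs_sub)
  obtain r c where rc: "r \<in> Qs k" "x = r \<otimes> e k [^] (c::int)" using assms by auto
  define M where "M = int (m k)"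
  have Mpos: "M > 0" using m_props(1) M_def by simp
  define a where "a = nat (c mod M)"
  have ia: "int a = c mod M" unfolding a_def using Mpos by simp
  have "c = c mod M + M * (c div M)" by simp
  then have "e k [^] c = e k [^] (c mod M) \<otimes> e k [^] (M * (c div M))"
    by (metis e_car int_pow_mult)
  also have "e k [^] (M * (c div M)) = (e k [^] M) [^] (c div M)" by (simp add: int_pow_pow)
  finally have ec: "e k [^] c = e k [^] a \<otimes> (e k [^] M) [^] (c div M)"
    by (metis ia int_pow_int)
  have eM: "e k [^] M \<in> Qs k" unfolding M_def int_pow_int using m_props(2) .
  have "x \<otimes> inv (e k [^] a) = r \<otimes> (e k [^] M) [^] (c div M)"
    using rc ec Qs_car eM by (simp add: m_ac)
  also have "\<dots> \<in> Qs k" using rc eM subgroup_int_pow_closed[OF Qs_sub] by blast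
  finally have xin: "x \<otimes> inv (e k [^] a) \<in> Qs k" .
  have "c mod M < M" using Mpos by simp
  then have "a < m k" using ia M_def by linarith
  then show ?thesis using xin by blast
qed

lemma a_uniq: assumes "a < m k" "b < m k" "x \<otimes> inv (e k [^] a) \<in> Qs k"
   "x \<otimes> inv (e k [^] b) \<in> Qs k" "x \<in> carrier Q"
  shows "a = b"
proof (rule ccontr)
  interpret S: subgroup "Qs k" Q by (rule Qs_sub)
  assume ne: "a \<noteq> b"
  have gen: "a < b \<Longrightarrow> a < m k \<Longrightarrow> b < m k \<Longrightarrow> x \<otimes> inv (e k [^] a) \<in> Qs k \<Longrightarrow>
     x \<otimes> inv (e k [^] b) \<in> Qs k \<Longrightarrow> False" for a b
  proof -
    assume ab: "a < b" "a < m k" "b < m k" "x \<otimes> inv (e k [^] a) \<in> Qs k" "x \<otimes> inv (e k [^] b) \<in> Qs k"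
    have "inv (x \<otimes> inv (e k [^] b)) \<otimes> (x \<otimes> inv (e k [^] a)) \<in> Qs k" using ab by auto
    moreover have "inv (x \<otimes> inv (e k [^] b)) \<otimes> (x \<otimes> inv (e k [^] a)) = e k [^] (b - a)"
    proof -
      have "e k [^] b = e k [^] (b - a) \<otimes> e k [^] a" using ab by (simp add: nat_pow_mult)
      then show ?thesis using assms(5)
        by (simp add: inv_mult_group m_ac)
    qed
    ultimately show False using m_props(3)[of "b - a"] ab by auto
  qed
  show False using ne gen[of a b] gen[of b a] assms by linarith
qed

definition a :: "nat \<Rightarrow> _ \<Rightarrow> nat" where
  "a k x = (SOME a. a < m k \<and> x \<otimes> inv (e k [^] a) \<in> Qs k)"

lemma a_props: "x \<in> Qs (Suc k) \<Longrightarrow> a k x < m k \<and> x \<otimes> inv (e k [^] a k x) \<in> Qs k"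
  unfolding a_def using a_ex by (rule someI_ex)

lemma a_zero: "x \<in> Qs k \<Longrightarrow> a k x = 0"
proof -
  assume x: "x \<in> Qs k"
  then have xs: "x \<in> Qs (Suc k)" using Qs_Suc by auto
  show ?thesis
    using a_uniq[of "a k x" k 0 x] a_props[OF xs] x m_props(1) Qs_car by auto
qed

lemma a_shift: assumes "x \<in> Qs (Suc k)" "p \<in> Qs k" shows "a k (x \<otimes> p) = a k x"
proof -
  interpret S: subgroup "Qs k" Q by (rule Qs_sub)
  have xc: "x \<in> carrier Q" "p \<in> carrier Q" using assms Qs_car by auto
  have xp: "x \<otimes> p \<in> Qs (Suc k)" using assms Qs_Suc subgroup.m_closed[OF Qs_sub] by blast
  have "(x \<otimes> p) \<otimes> inv (e k [^] a k x) = (x \<otimes> inv (e k [^] a k x)) \<otimes> p"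
    using xc by (simp add: m_ac)
  also have "\<dots> \<in> Qs k" using a_props[OF assms(1)] assms(2) by auto
  finally show ?thesis
    using a_uniq[of "a k (x \<otimes> p)" k "a k x" "x \<otimes> p"] a_props[OF xp] a_props[OF assms(1)] xc by auto
qed

lemma Qs_fin: "finite (Qs k)"
proof (induction k)
  case 0 then show ?case by simp
next
  case (Suc k)
  have "Qs (Suc k) \<subseteq> (\<lambda>(r, b). r \<otimes> e k [^] b) ` (Qs k \<times> {..<m k})"
  proof
    fix x assume x: "x \<in> Qs (Suc k)"
    have xc: "x \<in> carrier Q" using x Qs_car[of "Suc k"] by blast
    have "x = (x \<otimes> inv (e k [^] a k x)) \<otimes> e k [^] a k x" using xc by (simp add: m_assoc)
    then show "x \<in> (\<lambda>(r, b). r \<otimes> e k [^] b) ` (Qs k \<times> {..<m k})"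
      using a_props[OF x] by force
  qed
  then show ?case using Suc finite_subset by blast
qed

end




lemma (in group) canc2:
  "A \<in> carrier G \<Longrightarrow> B \<in> carrier G \<Longrightarrow> L \<in> carrier G \<Longrightarrow> (A \<otimes> L) \<otimes> inv (B \<otimes> L) = A \<otimes> inv B"
proof -
  assume c: "A \<in> carrier G" "B \<in> carrier G" "L \<in> carrier G"
  have "inv (B \<otimes> L) = inv L \<otimes> inv B" using c by (simp add: inv_mult_group)
  then have "(A \<otimes> L) \<otimes> inv (B \<otimes> L) = A \<otimes> (L \<otimes> (inv L \<otimes> inv B))" using c by (simp add: m_assoc)
  also have "L \<otimes> (inv L \<otimes> inv B) = inv B" using c by (simp add: m_assoc[symmetric])
  finally show ?thesis .
qed

locale secg = lfq Q e for Q (structure) and e +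
  fixes G :: "('g, 'c) monoid_scheme" and pj
  assumes G_grp: "group G" and pi_hom: "pj \<in> hom G Q" and pi_surj: "pj ` carrier G = carrier Q"
begin

definition lift :: "nat \<Rightarrow> 'g" where "lift k = (SOME g. g \<in> carrier G \<and> pj g = e k)"

lemma lift_props: "lift k \<in> carrier G \<and> pj (lift k) = e k"
proof -
  have "e k \<in> pj ` carrier G" by (subst pi_surj) (rule e_car)
  then obtain g where g: "e k = pj g" "g \<in> carrier G" by (rule imageE)
  then have ex: "\<exists>g. g \<in> carrier G \<and> pj g = e k" by auto
  show ?thesis unfolding lift_def by (rule someI_ex[OF ex])
qed

primrec S :: "nat \<Rightarrow> 'a \<Rightarrow> 'g" where
  "S 0 x = \<one>\<^bsub>G\<^esub>"
| "S (Suc k) x = S k (x \<otimes> inv (e k [^] a k x)) \<otimes>\<^bsub>G\<^esub> (lift k [^]\<^bsub>G\<^esub> a k x)"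

lemma S_props: "x \<in> Qs k \<Longrightarrow> S k x \<in> carrier G \<and> pj (S k x) = x"
proof (induction k arbitrary: x)
  case 0 then show ?case using monoid.one_closed[OF group.is_monoid[OF G_grp]] hom_one[OF pi_hom G_grp is_group] by simp
next
  case (Suc k)
  define y where "y = x \<otimes> inv (e k [^] a k x)"
  have y: "y \<in> Qs k" using a_props[OF Suc.prems] y_def by simp
  have IH: "S k y \<in> carrier G" "pj (S k y) = y" using Suc.IH[OF y] by auto
  have L: "lift k [^]\<^bsub>G\<^esub> a k x \<in> carrier G" using lift_props monoid.nat_pow_closed[OF group.is_monoid[OF G_grp]] by simp
  have pL: "pj (lift k [^]\<^bsub>G\<^esub> a k x) = e k [^] a k x"
    using hom_nat_pow[OF pi_hom conjunct1[OF lift_props] G_grp is_group] conjunct2[OF lift_props] by simp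
  have xc: "x \<in> carrier Q" using Suc.prems Qs_car by blast
  have eqS: "S (Suc k) x = S k y \<otimes>\<^bsub>G\<^esub> (lift k [^]\<^bsub>G\<^esub> a k x)" by (simp only: S.simps y_def)
  have px: "pj (S k y \<otimes>\<^bsub>G\<^esub> (lift k [^]\<^bsub>G\<^esub> a k x)) = x"
    using hom_mult[OF pi_hom IH(1) L] IH pL y_def xc by (simp add: m_assoc)
  show ?case unfolding eqS using monoid.m_closed[OF group.is_monoid[OF G_grp] IH(1) L] px by simp
qed

lemma S_stable: "x \<in> Qs k \<Longrightarrow> S (Suc k) x = S k x"
proof -
  assume x: "x \<in> Qs k"
  have xc: "x \<in> carrier Q" using x Qs_car by blast
  have "S (Suc k) x = S k x \<otimes>\<^bsub>G\<^esub> \<one>\<^bsub>G\<^esub>" using a_zero[OF x] xc by simp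
  also have "\<dots> = S k x" using S_props[OF x] monoid.r_one[OF group.is_monoid[OF G_grp]] by simp
  finally show ?thesis .
qed

lemma S_stable2: assumes x: "x \<in> Qs k" and kn: "k \<le> n" shows "S n x = S k x"
  using kn
proof (induction n rule: dec_induct)
  case base then show ?case by simp
next
  case (step n)
  then have "x \<in> Qs n" using Qs_mono x by blast
  then show ?case using S_stable step by simp
qed

lemma S_diff: "p \<in> Qs j \<Longrightarrow> j \<le> k \<Longrightarrow> x \<in> Qs k \<Longrightarrow>
  S k (x \<otimes> p) \<otimes>\<^bsub>G\<^esub> inv\<^bsub>G\<^esub> (S k x) \<in> (\<lambda>y. S j (y \<otimes> p) \<otimes>\<^bsub>G\<^esub> inv\<^bsub>G\<^esub> (S j y)) ` Qs j"
proof (induction k arbitrary: x)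
  case 0
  then have j0: "j = 0" by simp
  show ?case unfolding j0 using 0(3) by (rule imageI)
next
  case (Suc k)
  show ?case
  proof (cases "j = Suc k")
    case True show ?thesis using Suc.prems(3) unfolding True[symmetric] by (rule imageI)
  next
    case False
    then have jk: "j \<le> k" using Suc.prems by simp
    then have pk: "p \<in> Qs k" using Suc.prems Qs_mono by blast
    have pc: "p \<in> carrier Q" and xc: "x \<in> carrier Q" using pk Suc.prems Qs_car by blast+
    define b where "b = a k x"
    have ab: "a k (x \<otimes> p) = b" using a_shift[OF Suc.prems(3) pk] b_def by simp
    define y where "y = x \<otimes> inv (e k [^] b)"
    have y: "y \<in> Qs k" using a_props[OF Suc.prems(3)] y_def b_def by simp
    have yp: "y \<otimes> p \<in> Qs k" using y pk subgroup.m_closed[OF Qs_sub] by blast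
    have E: "inv (e k [^] b) \<in> carrier Q" by simp
    have "x \<otimes> p \<otimes> inv (e k [^] b) = x \<otimes> (p \<otimes> inv (e k [^] b))" using m_assoc[OF xc pc E] .
    also have "\<dots> = x \<otimes> (inv (e k [^] b) \<otimes> p)" using m_comm[OF pc E] by simp
    also have "\<dots> = y \<otimes> p" unfolding y_def using m_assoc[OF xc E pc] by simp
    finally have xpy: "x \<otimes> p \<otimes> inv (e k [^] b) = y \<otimes> p" .
    define L where "L = lift k [^]\<^bsub>G\<^esub> b"
    have L: "L \<in> carrier G" unfolding L_def using lift_props monoid.nat_pow_closed[OF group.is_monoid[OF G_grp]] by simp
    have c1: "S k (y \<otimes> p) \<in> carrier G" using S_props[OF yp] by simp
    have c2: "S k y \<in> carrier G" using S_props[OF y] by simp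
    have e1: "S (Suc k) (x \<otimes> p) = S k (y \<otimes> p) \<otimes>\<^bsub>G\<^esub> L" by (simp only: S.simps ab xpy L_def)
    have e2: "S (Suc k) x = S k y \<otimes>\<^bsub>G\<^esub> L" by (simp only: S.simps y_def b_def L_def)
    have "S (Suc k) (x \<otimes> p) \<otimes>\<^bsub>G\<^esub> inv\<^bsub>G\<^esub> (S (Suc k) x) = S k (y \<otimes> p) \<otimes>\<^bsub>G\<^esub> inv\<^bsub>G\<^esub> (S k y)"
      using group.canc2[OF G_grp c1 c2 L] by (simp only: e1 e2)
    then show ?thesis using Suc.IH[OF Suc.prems(1) jk y] by (simp only:)
  qed
qed

definition lev :: "'a \<Rightarrow> nat" where "lev x = (LEAST k. x \<in> Qs k)"
definition sec :: "'a \<Rightarrow> 'g" where "sec x = S (lev x) x"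

lemma lev_in: "x \<in> carrier Q \<Longrightarrow> x \<in> Qs (lev x)"
  unfolding lev_def by (rule LeastI_ex) (rule Qs_ex)

lemma sec_props: "x \<in> carrier Q \<Longrightarrow> sec x \<in> carrier G \<and> pj (sec x) = x"
  unfolding sec_def using S_props lev_in by blast

lemma sec_one: "sec \<one> = \<one>\<^bsub>G\<^esub>"
proof -
  have "lev \<one> \<le> 0" unfolding lev_def by (rule Least_le) simp
  then show ?thesis unfolding sec_def by simp
qed

lemma sec_fin: assumes p: "p \<in> carrier Q"
  shows "finite ((\<lambda>q. sec (q \<otimes> p) \<otimes>\<^bsub>G\<^esub> inv\<^bsub>G\<^esub> (sec q)) ` carrier Q)"
proof -
  let ?j = "lev p"
  have "(\<lambda>q. sec (q \<otimes> p) \<otimes>\<^bsub>G\<^esub> inv\<^bsub>G\<^esub> (sec q)) ` carrier Q \<subseteq>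
        (\<lambda>y. S ?j (y \<otimes> p) \<otimes>\<^bsub>G\<^esub> inv\<^bsub>G\<^esub> (S ?j y)) ` Qs ?j"
  proof clarify
    fix q assume q: "q \<in> carrier Q"
    define K where "K = max (lev q) ?j"
    have qK: "q \<in> Qs K" using lev_in[OF q] Qs_mono[of "lev q" K] K_def by auto
    have pK: "p \<in> Qs K" using lev_in[OF p] Qs_mono[of "lev p" K] K_def by auto
    have qpK: "q \<otimes> p \<in> Qs K" using qK pK subgroup.m_closed[OF Qs_sub] by blast
    have le: "lev (q \<otimes> p) \<le> K" unfolding lev_def using qpK by (rule Least_le)
    have qpc: "q \<otimes> p \<in> carrier Q" using q p by (rule m_closed)
    have e3: "sec (q \<otimes> p) = S K (q \<otimes> p)"
      unfolding sec_def using S_stable2[OF lev_in[OF qpc] le] by (rule sym)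
    have lq: "lev q \<le> K" and lp: "?j \<le> K" unfolding K_def by auto
    have e4: "sec q = S K q" unfolding sec_def using S_stable2[OF lev_in[OF q] lq] by (rule sym)
    have D: "S K (q \<otimes> p) \<otimes>\<^bsub>G\<^esub> inv\<^bsub>G\<^esub> (S K q) \<in> (\<lambda>y. S ?j (y \<otimes> p) \<otimes>\<^bsub>G\<^esub> inv\<^bsub>G\<^esub> (S ?j y)) ` Qs ?j"
      by (rule S_diff[OF lev_in[OF p] lp qK])
    show "sec (q \<otimes> p) \<otimes>\<^bsub>G\<^esub> inv\<^bsub>G\<^esub> (sec q) \<in> (\<lambda>y. S ?j (y \<otimes> p) \<otimes>\<^bsub>G\<^esub> inv\<^bsub>G\<^esub> (S ?j y)) ` Qs ?j"
      unfolding e3 e4 by (rule D)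
  qed
  then show ?thesis using Qs_fin finite_subset by blast
qed

end

lemma section_exists:
  assumes Qc: "comm_group Q" and Gg: "group G" and hom: "pj \<in> hom G Q"
    and surj: "pj ` carrier G = carrier Q" and cnt: "countable (carrier Q)"
    and ordp: "\<forall>x\<in>carrier Q. 0 < group.ord Q x"
  shows "\<exists>s. (\<forall>q\<in>carrier Q. s q \<in> carrier G \<and> pj (s q) = q) \<and> s \<one>\<^bsub>Q\<^esub> = \<one>\<^bsub>G\<^esub> \<and>
     (\<forall>p\<in>carrier Q. finite ((\<lambda>q. s (q \<otimes>\<^bsub>Q\<^esub> p) \<otimes>\<^bsub>G\<^esub> inv\<^bsub>G\<^esub> (s q)) ` carrier Q))"
proof -
  interpret Q: comm_group Q by (rule Qc)
  have ne: "carrier Q \<noteq> {}" by auto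
  have lf: "lfq Q (from_nat_into (carrier Q))"
    by (intro lfq.intro[OF Qc] lfq_axioms.intro) (use range_from_nat_into[OF ne cnt] ordp in auto)
  interpret secg Q "from_nat_into (carrier Q)" G pj
    by (intro secg.intro[OF lf] secg_axioms.intro Gg hom surj)
  have A: "\<forall>q\<in>carrier Q. sec q \<in> carrier G \<and> pj (sec q) = q" using sec_props by blast
  have B: "\<forall>p\<in>carrier Q. finite ((\<lambda>q. sec (q \<otimes>\<^bsub>Q\<^esub> p) \<otimes>\<^bsub>G\<^esub> inv\<^bsub>G\<^esub> (sec q)) ` carrier Q)"
    using sec_fin by blast
  show ?thesis by (intro exI[of _ sec] conjI A sec_one B)
qed



lemma proper_norm_D:
  assumes "proper_norm G N"
  shows "\<And>g. g \<in> carrier G \<Longrightarrow> N g = 0 \<longleftrightarrow> g = \<one>\<^bsub>G\<^esub>"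
    and "\<And>g. g \<in> carrier G \<Longrightarrow> N g = N (inv\<^bsub>G\<^esub> g)"
    and "\<And>g h. g \<in> carrier G \<Longrightarrow> h \<in> carrier G \<Longrightarrow> N (g \<otimes>\<^bsub>G\<^esub> h) \<le> N g + N h"
  using assms unfolding proper_norm_def by blast+

lemma (in group) proper_norm_one:
  assumes "proper_norm G N" shows "N \<one> = 0"
  using proper_norm_D(1)[OF assms one_closed] by blast

lemma (in group) proper_norm_nonneg:
  assumes "proper_norm G N" "g \<in> carrier G" shows "0 \<le> N g"
proof -
  have "N (g \<otimes> inv g) \<le> N g + N (inv g)" using proper_norm_D(3)[OF assms(1)] assms(2) by blast
  moreover have "N (inv g) = N g" using proper_norm_D(2)[OF assms] by metis
  moreover have "g \<otimes> inv g = \<one>" using assms(2) by (rule r_inv)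
  ultimately have "N \<one> \<le> N g + N g" by simp
  then show ?thesis using proper_norm_one[OF assms(1)] by linarith
qed

lemma proper_norm_fin:
  assumes "proper_norm G N" shows "finite {g\<in>carrier G. N g \<le> r}"
  using assms unfolding proper_norm_def by blast

lemma (in group) lcanc: "x \<in> carrier G \<Longrightarrow> z \<in> carrier G \<Longrightarrow> inv x \<otimes> (x \<otimes> z) = z"
  by (simp add: m_assoc[symmetric])

lemma (in comm_group) alg1:
  assumes x: "x \<in> carrier G" and g: "g \<in> carrier G" and a: "a \<in> carrier G" and b: "b \<in> carrier G"
  shows "inv (x \<otimes> inv a) \<otimes> (x \<otimes> g \<otimes> inv b) = g \<otimes> inv (b \<otimes> inv a)"
proof -
  have "inv (x \<otimes> inv a) = inv x \<otimes> a" using x a by (simp add: inv_mult)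
  then have "inv (x \<otimes> inv a) \<otimes> (x \<otimes> g \<otimes> inv b) = inv x \<otimes> (a \<otimes> (x \<otimes> (g \<otimes> inv b)))"
    using x g a b by (simp add: m_assoc)
  also have "\<dots> = inv x \<otimes> (x \<otimes> (a \<otimes> (g \<otimes> inv b)))" using x g a b by (simp add: m_lcomm[of a x])
  also have "\<dots> = a \<otimes> (g \<otimes> inv b)" using x g a b by (simp add: lcanc)
  also have "\<dots> = g \<otimes> inv (b \<otimes> inv a)" using g a b by (simp add: inv_mult m_ac)
  finally show ?thesis .
qed

lemma (in comm_group) alg2:
  assumes "h1 \<in> carrier G" "h2 \<in> carrier G" "c \<in> carrier G" "d \<in> carrier G"
  shows "inv (h1 \<otimes> c) \<otimes> (h2 \<otimes> d) = (inv h1 \<otimes> h2) \<otimes> (d \<otimes> inv c)"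
  using assms by (simp add: inv_mult m_ac)


lemma (in comm_group) main_aux:
  assumes sub: "subgroup H G" and cnt: "countable (carrier G)"
    and ordp: "\<forall>x\<in>carrier (G Mod H). 0 < group.ord (G Mod H) x"
  shows "coarsely_split (G\<lparr>carrier := H\<rparr>) G (G Mod H) (\<lambda>h. h) (\<lambda>g. H #> g)"
proof -
  define K where "K = G\<lparr>carrier := H\<rparr>"
  define pr where "pr = (\<lambda>g. H #> g)"
  have nrm: "H \<lhd> G" using sub by (rule subgroup_imp_normal)
  have Qc: "comm_group (G Mod H)" using sub by (rule abelian_FactGroup)
  interpret Q: comm_group "G Mod H" by (rule Qc)
  have hom: "pr \<in> hom G (G Mod H)" unfolding pr_def using normal.r_coset_hom_Mod[OF nrm] .
  interpret PR: group_hom G "G Mod H" pr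
    by (intro group_hom.intro is_group Q.is_group group_hom_axioms.intro hom)
  have surj: "pr ` carrier G = carrier (G Mod H)" unfolding pr_def carrier_FactGroup by (rule refl)
  have cQ: "countable (carrier (G Mod H))" using countable_image[OF cnt, of pr] unfolding surj .
  obtain s where s1: "\<forall>q\<in>carrier (G Mod H). s q \<in> carrier G \<and> pr (s q) = q"
    and s2: "s \<one>\<^bsub>G Mod H\<^esub> = \<one>"
    and s3: "\<forall>p\<in>carrier (G Mod H). finite ((\<lambda>q. s (q \<otimes>\<^bsub>G Mod H\<^esub> p) \<otimes> inv (s q)) ` carrier (G Mod H))"
    using section_exists[OF Qc is_group hom surj cQ ordp] by blast
  have sc: "\<And>q. q \<in> carrier (G Mod H) \<Longrightarrow> s q \<in> carrier G" using s1 by blast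
  have sp: "\<And>q. q \<in> carrier (G Mod H) \<Longrightarrow> pr (s q) = q" using s1 by blast
  have Kg: "group K" unfolding K_def using subgroup.subgroup_is_group[OF sub is_group] .
  have carK: "carrier K = H" unfolding K_def by simp
  have cK: "countable (carrier K)" unfolding carK using countable_subset[OF subgroup.subset[OF sub] cnt] .
  obtain NK where NK: "proper_norm K NK" using group.proper_norm_exists[OF Kg cK] by blast
  obtain NG where NG: "proper_norm G NG" using proper_norm_exists[OF cnt] by blast
  obtain NQ where NQ: "proper_norm (G Mod H) NQ" using Q.proper_norm_exists[OF cQ] by blast
  have Hc: "\<And>h. h \<in> H \<Longrightarrow> h \<in> carrier G" using subgroup.subset[OF sub] by blast
  have multK: "\<And>a b. a \<otimes>\<^bsub>K\<^esub> b = a \<otimes> b" unfolding K_def by simp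
  have invK: "\<And>h. h \<in> H \<Longrightarrow> inv\<^bsub>K\<^esub> h = inv h" unfolding K_def using m_inv_consistent[OF sub] by blast
  have pr_car: "\<And>x. x \<in> carrier G \<Longrightarrow> pr x \<in> carrier (G Mod H)" using hom_in_carrier[OF hom] by blast
  have pr_mult: "\<And>x y. x \<in> carrier G \<Longrightarrow> y \<in> carrier G \<Longrightarrow> pr (x \<otimes> y) = pr x \<otimes>\<^bsub>G Mod H\<^esub> pr y"
    using hom_mult[OF hom] by blast
  have pr_inv: "\<And>x. x \<in> carrier G \<Longrightarrow> pr (inv x) = inv\<^bsub>G Mod H\<^esub> (pr x)" using PR.hom_inv by blast
  have pr_H: "\<And>h. h \<in> H \<Longrightarrow> pr h = \<one>\<^bsub>G Mod H\<^esub>"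
    unfolding pr_def one_FactGroup using subgroup.rcos_const[OF sub is_group] by blast
  have pr_ker: "\<And>y. y \<in> carrier G \<Longrightarrow> pr y = \<one>\<^bsub>G Mod H\<^esub> \<Longrightarrow> y \<in> H"
    unfolding pr_def one_FactGroup using rcos_self[OF _ sub] by metis
  define f where "f = (\<lambda>g. (g \<otimes> inv (s (pr g)), pr g))"
  define v where "v = (\<lambda>z. fst z \<otimes> s (snd z))"
  have fH: "\<And>g. g \<in> carrier G \<Longrightarrow> g \<otimes> inv (s (pr g)) \<in> H"
  proof -
    fix g assume g: "g \<in> carrier G"
    have sg: "s (pr g) \<in> carrier G" using sc pr_car g by blast
    have "pr (g \<otimes> inv (s (pr g))) = pr g \<otimes>\<^bsub>G Mod H\<^esub> inv\<^bsub>G Mod H\<^esub> (pr g)"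
      using pr_mult[OF g inv_closed[OF sg]] pr_inv[OF sg] sp[OF pr_car[OF g]] by simp
    also have "\<dots> = \<one>\<^bsub>G Mod H\<^esub>" by (rule Q.r_inv[OF pr_car[OF g]])
    finally have "pr (g \<otimes> inv (s (pr g))) = \<one>\<^bsub>G Mod H\<^esub>" .
    then show "g \<otimes> inv (s (pr g)) \<in> H" by (rule pr_ker[OF m_closed[OF g inv_closed[OF sg]]])
  qed
  let ?dK = "norm_metric K NK" and ?dQ = "norm_metric (G Mod H) NQ" and ?dG = "norm_metric G NG"
  have fcoarse: "coarse_map (carrier G) ?dG (carrier K \<times> carrier (G Mod H)) (sum_metric ?dK ?dQ) f"
    unfolding coarse_map_def
  proof (intro conjI allI impI)
    show "f ` carrier G \<subseteq> carrier K \<times> carrier (G Mod H)"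
      unfolding f_def carK using fH pr_car by blast
  next
    fix dlt :: real assume "dlt > 0"
    define B where "B = {g \<in> carrier G. NG g \<le> dlt}"
    have Bf: "finite B" unfolding B_def using proper_norm_fin[OF NG] .
    define V where "V = (\<Union>g\<in>B. (\<lambda>D. NK (g \<otimes> inv D) + NQ (pr g)) `
        ((\<lambda>q. s (q \<otimes>\<^bsub>G Mod H\<^esub> pr g) \<otimes> inv (s q)) ` carrier (G Mod H)))"
    have Vf: "finite V" unfolding V_def
    proof (rule finite_UN_I[OF Bf], rule finite_imageI)
      fix g assume "g \<in> B" then have "g \<in> carrier G" unfolding B_def by blast
      then show "finite ((\<lambda>q. s (q \<otimes>\<^bsub>G Mod H\<^esub> pr g) \<otimes> inv (s q)) ` carrier (G Mod H))"
        using s3 pr_car by blast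
    qed
    define eps where "eps = Max (insert 0 V) + 1"
    have "0 \<le> Max (insert 0 V)" using Vf by (intro Max_ge) auto
    then have epos: "eps > 0" unfolding eps_def by linarith
    show "\<exists>eps>0. \<forall>x\<in>carrier G. \<forall>y\<in>carrier G. ?dG x y \<le> dlt \<longrightarrow> sum_metric ?dK ?dQ (f x) (f y) \<le> eps"
    proof (intro exI[of _ eps] conjI epos ballI impI)
      fix x y assume x: "x \<in> carrier G" and y: "y \<in> carrier G" and d: "?dG x y \<le> dlt"
      define g where "g = inv x \<otimes> y"
      have g: "g \<in> carrier G" unfolding g_def using x y by simp
      have gB: "g \<in> B" using d g unfolding B_def g_def norm_metric_def by simp
      have yxg: "y = x \<otimes> g" unfolding g_def using x y by (simp add: m_assoc[symmetric])
      define a where "a = s (pr x)"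
      define b where "b = s (pr y)"
      have a: "a \<in> carrier G" unfolding a_def using sc pr_car x by blast
      have b: "b \<in> carrier G" unfolding b_def using sc pr_car y by blast
      have bq: "b = s (pr x \<otimes>\<^bsub>G Mod H\<^esub> pr g)" unfolding b_def yxg using pr_mult[OF x g] by simp
      have xa: "x \<otimes> inv a \<in> H" unfolding a_def using fH[OF x] .
      have "sum_metric ?dK ?dQ (f x) (f y) = NK (inv (x \<otimes> inv a) \<otimes> (y \<otimes> inv b)) + NQ (inv\<^bsub>G Mod H\<^esub> (pr x) \<otimes>\<^bsub>G Mod H\<^esub> pr y)"
        unfolding sum_metric_def norm_metric_def f_def a_def b_def using invK xa a_def multK by simp
      also have "inv (x \<otimes> inv a) \<otimes> (y \<otimes> inv b) = g \<otimes> inv (b \<otimes> inv a)"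
        unfolding yxg using alg1[OF x g a b] .
      also have "inv\<^bsub>G Mod H\<^esub> (pr x) \<otimes>\<^bsub>G Mod H\<^esub> pr y = pr g"
        unfolding g_def using pr_mult[OF inv_closed[OF x] y] pr_inv[OF x] by simp
      finally have eq: "sum_metric ?dK ?dQ (f x) (f y) = NK (g \<otimes> inv (b \<otimes> inv a)) + NQ (pr g)" .
      have "NK (g \<otimes> inv (b \<otimes> inv a)) + NQ (pr g) \<in> V"
        unfolding V_def bq a_def using gB pr_car[OF x] by blast
      then have "NK (g \<otimes> inv (b \<otimes> inv a)) + NQ (pr g) \<le> Max (insert 0 V)" using Vf by simp
      then show "sum_metric ?dK ?dQ (f x) (f y) \<le> eps" unfolding eq eps_def by linarith
    qed
  qed
  have vcoarse: "coarse_map (carrier K \<times> carrier (G Mod H)) (sum_metric ?dK ?dQ) (carrier G) ?dG v"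
    unfolding coarse_map_def
  proof (intro conjI allI impI)
    show "v ` (carrier K \<times> carrier (G Mod H)) \<subseteq> carrier G"
      unfolding v_def carK using Hc sc by auto
  next
    fix dlt :: real assume "dlt > 0"
    define BK where "BK = {h \<in> carrier K. NK h \<le> dlt}"
    define BQ where "BQ = {q \<in> carrier (G Mod H). NQ q \<le> dlt}"
    have BKf: "finite BK" unfolding BK_def using proper_norm_fin[OF NK] .
    have BQf: "finite BQ" unfolding BQ_def using proper_norm_fin[OF NQ] .
    define V where "V = (\<Union>h\<in>BK. \<Union>p\<in>BQ. (\<lambda>D. NG (h \<otimes> D)) `
        ((\<lambda>q. s (q \<otimes>\<^bsub>G Mod H\<^esub> p) \<otimes> inv (s q)) ` carrier (G Mod H)))"
    have Vf: "finite V" unfolding V_def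
    proof (rule finite_UN_I[OF BKf], rule finite_UN_I[OF BQf], rule finite_imageI)
      fix p assume "p \<in> BQ" then have "p \<in> carrier (G Mod H)" unfolding BQ_def by blast
      then show "finite ((\<lambda>q. s (q \<otimes>\<^bsub>G Mod H\<^esub> p) \<otimes> inv (s q)) ` carrier (G Mod H))"
        using s3 by blast
    qed
    define eps where "eps = Max (insert 0 V) + 1"
    have "0 \<le> Max (insert 0 V)" using Vf by (intro Max_ge) auto
    then have epos: "eps > 0" unfolding eps_def by linarith
    show "\<exists>eps>0. \<forall>x\<in>carrier K \<times> carrier (G Mod H). \<forall>y\<in>carrier K \<times> carrier (G Mod H).
        sum_metric ?dK ?dQ x y \<le> dlt \<longrightarrow> ?dG (v x) (v y) \<le> eps"
    proof (intro exI[of _ eps] conjI epos ballI impI)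
      fix z1 z2 assume z1: "z1 \<in> carrier K \<times> carrier (G Mod H)" and z2: "z2 \<in> carrier K \<times> carrier (G Mod H)"
        and d: "sum_metric ?dK ?dQ z1 z2 \<le> dlt"
      obtain h1 q1 where z1e: "z1 = (h1, q1)" by (cases z1)
      obtain h2 q2 where z2e: "z2 = (h2, q2)" by (cases z2)
      have h1: "h1 \<in> H" and q1: "q1 \<in> carrier (G Mod H)" using z1 z1e carK by auto
      have h2: "h2 \<in> H" and q2: "q2 \<in> carrier (G Mod H)" using z2 z2e carK by auto
      define hh where "hh = inv h1 \<otimes> h2"
      define p where "p = inv\<^bsub>G Mod H\<^esub> q1 \<otimes>\<^bsub>G Mod H\<^esub> q2"
      have hhH: "hh \<in> H" unfolding hh_def using h1 h2 sub by (simp add: subgroup.m_closed subgroup.m_inv_closed)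
      have hhK: "hh = inv\<^bsub>K\<^esub> h1 \<otimes>\<^bsub>K\<^esub> h2" unfolding hh_def using invK[OF h1] multK by simp
      have pc: "p \<in> carrier (G Mod H)" unfolding p_def by (rule Q.m_closed[OF Q.inv_closed[OF q1] q2])
      have dd: "NK hh + NQ p \<le> dlt" using d unfolding z1e z2e sum_metric_def norm_metric_def hhK p_def by simp
      have n1: "0 \<le> NK hh" using group.proper_norm_nonneg[OF Kg NK] hhH carK by blast
      have n2: "0 \<le> NQ p" using Q.proper_norm_nonneg[OF NQ pc] .
      have hhB: "hh \<in> BK" unfolding BK_def using hhH carK dd n2 by auto
      have pB: "p \<in> BQ" unfolding BQ_def using pc dd n1 by auto
      have q2e: "q2 = q1 \<otimes>\<^bsub>G Mod H\<^esub> p" unfolding p_def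
        by (simp only: Q.m_assoc[symmetric, OF q1 Q.inv_closed[OF q1] q2] Q.r_inv[OF q1] Q.l_one[OF q2])
      have "?dG (v z1) (v z2) = NG (inv (h1 \<otimes> s q1) \<otimes> (h2 \<otimes> s q2))"
        unfolding z1e z2e v_def norm_metric_def by simp
      also have "inv (h1 \<otimes> s q1) \<otimes> (h2 \<otimes> s q2) = hh \<otimes> (s q2 \<otimes> inv (s q1))"
        unfolding hh_def using alg2[OF Hc[OF h1] Hc[OF h2] sc[OF q1] sc[OF q2]] .
      finally have eq: "?dG (v z1) (v z2) = NG (hh \<otimes> (s (q1 \<otimes>\<^bsub>G Mod H\<^esub> p) \<otimes> inv (s q1)))"
        unfolding q2e .
      have "NG (hh \<otimes> (s (q1 \<otimes>\<^bsub>G Mod H\<^esub> p) \<otimes> inv (s q1))) \<in> V"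
        unfolding V_def using hhB pB q1 by blast
      then have "NG (hh \<otimes> (s (q1 \<otimes>\<^bsub>G Mod H\<^esub> p) \<otimes> inv (s q1))) \<le> Max (insert 0 V)" using Vf by simp
      then show "?dG (v z1) (v z2) \<le> eps" unfolding eq eps_def by linarith
    qed
  qed
  have NK1: "NK \<one> = 0" using group.proper_norm_one[OF Kg NK] unfolding K_def by simp
  have NG1: "NG \<one> = 0" using proper_norm_one[OF NG] .
  have NQ1: "NQ \<one>\<^bsub>G Mod H\<^esub> = 0" using Q.proper_norm_one[OF NQ] .
  have vf: "\<And>g. g \<in> carrier G \<Longrightarrow> v (f g) = g"
  proof -
    fix g assume g: "g \<in> carrier G"
    have sg: "s (pr g) \<in> carrier G" using sc pr_car g by blast
    show "v (f g) = g" unfolding v_def f_def using g sg by (simp add: m_assoc)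
  qed
  have fv: "\<And>h q. h \<in> H \<Longrightarrow> q \<in> carrier (G Mod H) \<Longrightarrow> f (v (h, q)) = (h, q)"
  proof -
    fix h q assume h: "h \<in> H" and q: "q \<in> carrier (G Mod H)"
    have pq: "pr (h \<otimes> s q) = q" unfolding pr_mult[OF Hc[OF h] sc[OF q]] pr_H[OF h] sp[OF q] by (rule Q.l_one[OF q])
    show "f (v (h, q)) = (h, q)" unfolding v_def f_def using pq Hc[OF h] sc[OF q] by (simp add: m_assoc)
  qed
  have ceq: "coarse_equivalence (carrier G) ?dG (carrier K \<times> carrier (G Mod H)) (sum_metric ?dK ?dQ) f"
    unfolding coarse_equivalence_def
  proof (intro conjI exI[of _ v] fcoarse vcoarse)
    show "bounded_distance (carrier G) ?dG (v \<circ> f) id"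
      unfolding bounded_distance_def
    proof (intro exI[of _ 0] ballI)
      fix g assume g: "g \<in> carrier G"
      show "?dG ((v \<circ> f) g) (id g) \<le> 0" unfolding norm_metric_def using vf[OF g] g NG1 by simp
    qed
    show "bounded_distance (carrier K \<times> carrier (G Mod H)) (sum_metric ?dK ?dQ) (f \<circ> v) id"
      unfolding bounded_distance_def
    proof (intro exI[of _ 0] ballI)
      fix z assume z: "z \<in> carrier K \<times> carrier (G Mod H)"
      obtain h q where ze: "z = (h, q)" by (cases z)
      have h: "h \<in> H" and q: "q \<in> carrier (G Mod H)" using z ze carK by auto
      have hK: "h \<in> carrier K" using h carK by simp
      have "inv\<^bsub>K\<^esub> h \<otimes>\<^bsub>K\<^esub> h = \<one>\<^bsub>K\<^esub>" using group.l_inv[OF Kg hK] .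
      then have e1: "NK (inv\<^bsub>K\<^esub> h \<otimes>\<^bsub>K\<^esub> h) = 0" using group.proper_norm_one[OF Kg NK] by simp
      have e2: "NQ (inv\<^bsub>G Mod H\<^esub> q \<otimes>\<^bsub>G Mod H\<^esub> q) = 0" using Q.l_inv[OF q] NQ1 by simp
      show "sum_metric ?dK ?dQ ((f \<circ> v) z) (id z) \<le> 0"
        unfolding ze sum_metric_def norm_metric_def using fv[OF h q] e1 e2 by simp
    qed
  qed
  have bd1: "bounded_distance (carrier K) (sum_metric ?dK ?dQ) (f \<circ> (\<lambda>h. h)) (\<lambda>k. (k, \<one>\<^bsub>G Mod H\<^esub>))"
    unfolding bounded_distance_def
  proof (intro exI[of _ 0] ballI)
    fix h assume hK: "h \<in> carrier K"
    have h: "h \<in> H" using hK carK by simp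
    have fh: "f h = (h, \<one>\<^bsub>G Mod H\<^esub>)" unfolding f_def using pr_H[OF h] s2 Hc[OF h] by simp
    have "inv\<^bsub>K\<^esub> h \<otimes>\<^bsub>K\<^esub> h = \<one>\<^bsub>K\<^esub>" using group.l_inv[OF Kg hK] .
    then have e1: "NK (inv\<^bsub>K\<^esub> h \<otimes>\<^bsub>K\<^esub> h) = 0" using group.proper_norm_one[OF Kg NK] by simp
    have e2: "NQ (inv\<^bsub>G Mod H\<^esub> \<one>\<^bsub>G Mod H\<^esub> \<otimes>\<^bsub>G Mod H\<^esub> \<one>\<^bsub>G Mod H\<^esub>) = 0"
      using Q.l_inv[OF Q.one_closed] NQ1 by simp
    show "sum_metric ?dK ?dQ ((f \<circ> (\<lambda>h. h)) h) (h, \<one>\<^bsub>G Mod H\<^esub>) \<le> 0"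
      unfolding sum_metric_def norm_metric_def using fh e1 e2 by simp
  qed
  have bd2: "bounded_distance (carrier G) ?dQ (snd \<circ> f) pr"
    unfolding bounded_distance_def
  proof (intro exI[of _ 0] ballI)
    fix g assume g: "g \<in> carrier G"
    have e2: "NQ (inv\<^bsub>G Mod H\<^esub> (pr g) \<otimes>\<^bsub>G Mod H\<^esub> pr g) = 0" using Q.l_inv[OF pr_car[OF g]] NQ1 by simp
    show "?dQ ((snd \<circ> f) g) (pr g) \<le> 0" unfolding norm_metric_def f_def using e2 by simp
  qed
  show ?thesis unfolding coarsely_split_def K_def[symmetric] pr_def[symmetric]
    using NK NG NQ ceq bd1 bd2 by blast
qed


theorem mainTheorem4:
  fixes G :: "'a monoid" and H :: "'a set"
  assumes "comm_group G"
    and "countable (carrier G)"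
    and "subgroup H G"
    and "\<forall>x\<in>carrier (G Mod H). odd (group.ord (G Mod H) x)"
  shows "coarsely_split (G\<lparr>carrier := H\<rparr>) G (G Mod H) (\<lambda>h. h) (\<lambda>g. H #>\<^bsub>G\<^esub> g)"
proof -
  have op: "\<forall>x\<in>carrier (G Mod H). 0 < group.ord (G Mod H) x"
    using assms(4) odd_pos by blast
  show ?thesis by (rule comm_group.main_aux[OF assms(1) assms(3) assms(2) op])
qed

end
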